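(* For every $\delta>0$ and every integer $m\ge2$ there exists a scheduling game on $m$ identical machines of speed $1$, in which every job $i$ has processing-time function $p_i(t)=\max\{b_i-a_it,\tau\}$ with $b_i\ge0$, $0\le a_i\le1$, common threshold $\tau>0$, and all machines use the SDR global priority list (non-decreasing order of $a_i$, ties broken arbitrarily), whose price of anarchy is at least $2-\delta$. Hence the bound $2$ for SDR is tight for every $m\ge2$.
   Context: Scheduling game: a finite set $N$ of $n$ jobs (players) and a set $M$ of $m$ machines; machine $j$ has speed $s_j>0$. With a global priority list, all machines share the same bijection $\pi:N\to\{1,\dots,n\}$, and job $u$ has higher priority than $v$ iff $\pi(u)<\pi(v)$. A profile $\sigma\in M^N$ assigns each job to a machine. On machine $j$, the jobs assigned to it, listed in increasing $\pi$-order as $i_1,i_2,\dots$, are processed without idle time: $S_{i_1}(\sigma)=0$, $C_{i_k}(\sigma)=S_{i_k}(\sigma)+p_{i_k}(S_{i_k}(\sigma))/s_j$, $S_{i_{k+1}}(\sigma)=C_{i_k}(\sigma)$. The cost of job $i$ is $C_i(\sigma)$. A pure Nash equilibrium (NE) is a profile in which no job can strictly decrease its completion time by unilaterally changing its machine. Makespan $C_{\max}(\sigma)=\max_iC_i(\sigma)$; $OPT(G)=\min_\sigma C_{\max}(\sigma)$; $PoA(G)=\max_{\sigma\text{ NE}}C_{\max}(\sigma)/OPT(G)$. *)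

theory Defs
  imports Main "HOL.Real"
begin

text \<open>The global priority list is a list prio that is
  a permutation of [0..<n] (earlier in the list = higher priority).
  p k t is the processing time of job k when started at time t, s j the speed of machine j.\<close>

fun seq_completion :: "(nat \<Rightarrow> real \<Rightarrow> real) \<Rightarrow> real \<Rightarrow> nat list \<Rightarrow> real \<Rightarrow> nat \<Rightarrow> real" where
  "seq_completion p sp [] t i = 0"
| "seq_completion p sp (k # ks) t i =
     (let c = t + p k t / sp in if i = k then c else seq_completion p sp ks c i)"

definition completion ::
  "(nat \<Rightarrow> real \<Rightarrow> real) \<Rightarrow> (nat \<Rightarrow> real) \<Rightarrow> nat list \<Rightarrow> (nat \<Rightarrow> nat) \<Rightarrow> nat \<Rightarrow> real" where
  "completion p s prio \<sigma> i =
     seq_completion p (s (\<sigma> i)) (filter (\<lambda>k. \<sigma> k = \<sigma> i) prio) 0 i"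

definition valid_profile :: "nat \<Rightarrow> nat \<Rightarrow> (nat \<Rightarrow> nat) \<Rightarrow> bool" where
  "valid_profile n m \<sigma> \<longleftrightarrow> (\<forall>i<n. \<sigma> i < m)"

definition is_NE ::
  "nat \<Rightarrow> nat \<Rightarrow> (nat \<Rightarrow> real \<Rightarrow> real) \<Rightarrow> (nat \<Rightarrow> real) \<Rightarrow> nat list \<Rightarrow> (nat \<Rightarrow> nat) \<Rightarrow> bool" where
  "is_NE n m p s prio \<sigma> \<longleftrightarrow> valid_profile n m \<sigma> \<and>
     (\<forall>i<n. \<forall>j<m. completion p s prio \<sigma> i \<le> completion p s prio (\<sigma>(i := j)) i)"

definition makespan ::
  "nat \<Rightarrow> (nat \<Rightarrow> real \<Rightarrow> real) \<Rightarrow> (nat \<Rightarrow> real) \<Rightarrow> nat list \<Rightarrow> (nat \<Rightarrow> nat) \<Rightarrow> real" where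
  "makespan n p s prio \<sigma> = Max (insert 0 (completion p s prio \<sigma> ` {..<n}))"

definition OPT ::
  "nat \<Rightarrow> nat \<Rightarrow> (nat \<Rightarrow> real \<Rightarrow> real) \<Rightarrow> (nat \<Rightarrow> real) \<Rightarrow> nat list \<Rightarrow> real" where
  "OPT n m p s prio = Inf {makespan n p s prio \<sigma> | \<sigma>. valid_profile n m \<sigma>}"

definition PoA ::
  "nat \<Rightarrow> nat \<Rightarrow> (nat \<Rightarrow> real \<Rightarrow> real) \<Rightarrow> (nat \<Rightarrow> real) \<Rightarrow> nat list \<Rightarrow> real" where
  "PoA n m p s prio =
     Sup {makespan n p s prio \<sigma> / OPT n m p s prio | \<sigma>. is_NE n m p s prio \<sigma>}"

definition SDR_list :: "nat \<Rightarrow> (nat \<Rightarrow> real) \<Rightarrow> nat list \<Rightarrow> bool" where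
  "SDR_list n a prio \<longleftrightarrow> distinct prio \<and> set prio = {..<n} \<and> sorted (map a prio)"

end

theory Submission
  imports Defs
begin
fun fin :: "(nat \<Rightarrow> real \<Rightarrow> real) \<Rightarrow> real \<Rightarrow> nat list \<Rightarrow> real \<Rightarrow> real" where
  "fin p sp [] t = t"
| "fin p sp (k # ks) t = fin p sp ks (t + p k t / sp)"

lemma seq_app:
  "i \<notin> set xs \<Longrightarrow> seq_completion p sp (xs @ i # ys) t i = fin p sp xs t + p i (fin p sp xs t) / sp"
  by (induction xs arbitrary: t) (auto simp: Let_def)

lemma fin_chain:
  "(\<forall>k\<in>set xs. p k = q) \<Longrightarrow> fin p sp xs t = ((\<lambda>t. t + q t / sp) ^^ length xs) t"
proof (induction xs arbitrary: t)
  case Nil then show ?case by simp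
next
  case (Cons k ks)
  then have "fin p sp (k # ks) t = ((\<lambda>t. t + q t / sp) ^^ length ks) (t + q t / sp)" by simp
  also have "\<dots> = ((\<lambda>t. t + q t / sp) ^^ length (k # ks)) t"
    by (simp only: length_Cons funpow_Suc_right comp_def)
  finally show ?case .
qed

definition hh :: "real \<Rightarrow> real \<Rightarrow> real \<Rightarrow> real" where
  "hh \<alpha> \<tau> t = t + max (\<alpha> - \<alpha> * t) \<tau>"

lemma compl:
  assumes "i < Suc N" "\<forall>k<N. b k = \<alpha>"
  shows "completion (\<lambda>i t. max (b i - \<alpha> * t) \<tau>) (\<lambda>j. 1) [0..<Suc N] \<sigma> i
    = (hh \<alpha> \<tau> ^^ length (filter (\<lambda>k. \<sigma> k = \<sigma> i) [0..<i])) 0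
      + max (b i - \<alpha> * (hh \<alpha> \<tau> ^^ length (filter (\<lambda>k. \<sigma> k = \<sigma> i) [0..<i])) 0) \<tau>"
proof -
  have u: "[0..<Suc N] = [0..<i] @ i # [Suc i..<Suc N]"
  proof -
    have "[0..<Suc N] = [0..<i] @ [i..<i + (Suc N - i)]"
      using assms(1) upt_add_eq_append[of 0 i "Suc N - i"] by simp
    also have "[i..<i + (Suc N - i)] = i # [Suc i..<Suc N]"
      using assms(1) by (simp add: upt_conv_Cons)
    finally show ?thesis .
  qed
  let ?xs = "filter (\<lambda>k. \<sigma> k = \<sigma> i) [0..<i]"
  have f: "filter (\<lambda>k. \<sigma> k = \<sigma> i) [0..<Suc N] = ?xs @ i # filter (\<lambda>k. \<sigma> k = \<sigma> i) [Suc i..<Suc N]"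
    unfolding u by (simp del: upt_Suc)
  have ni: "i \<notin> set ?xs" by simp
  have ch: "\<forall>k\<in>set ?xs. (\<lambda>i t. max (b i - \<alpha> * t) \<tau>) k = (\<lambda>t. max (\<alpha> - \<alpha> * t) \<tau>)"
    using assms by auto
  have hf: "(\<lambda>t. t + max (\<alpha> - \<alpha> * t) \<tau> / 1) = hh \<alpha> \<tau>"
    by (auto simp: hh_def)
  show ?thesis
    unfolding completion_def f seq_app[OF ni] fin_chain[OF ch] hf by simp
qed

context
  fixes \<alpha> \<tau> :: real
  assumes a0: "0 \<le> \<alpha>" and a1: "\<alpha> \<le> 1" and t0: "0 < \<tau>"
begin

lemma hh_mono: "s \<le> t \<Longrightarrow> hh \<alpha> \<tau> s \<le> hh \<alpha> \<tau> t"
proof -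
  assume st: "s \<le> t"
  have "(1 - \<alpha>) * s \<le> (1 - \<alpha>) * t" using st a1 by (simp add: mult_left_mono)
  then have "s - \<alpha> * s \<le> t - \<alpha> * t" by (simp add: algebra_simps)
  then show ?thesis unfolding hh_def max_def using st by (simp split: if_splits; linarith)
qed

lemma hh_ge: "t \<le> hh \<alpha> \<tau> t"
  unfolding hh_def using t0 by linarith

lemma pow_mono_aux: "(hh \<alpha> \<tau> ^^ k) t \<le> (hh \<alpha> \<tau> ^^ (k + d)) t"
proof (induction d)
  case 0 then show ?case by simp
next
  case (Suc d)
  then show ?case using hh_ge[of "(hh \<alpha> \<tau> ^^ (k + d)) t"] by simp
qed

lemma pow_mono: "k \<le> k' \<Longrightarrow> (hh \<alpha> \<tau> ^^ k) t \<le> (hh \<alpha> \<tau> ^^ k') t"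
  using pow_mono_aux[of k t "k' - k"] by simp

lemma pow_nonneg: "0 \<le> (hh \<alpha> \<tau> ^^ k) 0"
  using pow_mono[of 0 k 0] by simp

lemma pow_lower: "1 - (1 - \<alpha>) ^ k \<le> (hh \<alpha> \<tau> ^^ k) 0"
proof (induction k)
  case 0 then show ?case by simp
next
  case (Suc k)
  have "1 - (1 - \<alpha>) ^ Suc k = \<alpha> + (1 - \<alpha>) * (1 - (1 - \<alpha>) ^ k)"
    by (simp add: algebra_simps)
  also have "\<dots> \<le> \<alpha> + (1 - \<alpha>) * (hh \<alpha> \<tau> ^^ k) 0"
    using Suc a1 by (simp add: mult_left_mono)
  also have "\<dots> \<le> hh \<alpha> \<tau> ((hh \<alpha> \<tau> ^^ k) 0)"
    unfolding hh_def by (simp add: algebra_simps)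
  finally show ?case by simp
qed

lemma pow_upper: "(hh \<alpha> \<tau> ^^ k) 0 \<le> 1 + k * \<tau>"
proof (induction k)
  case 0 then show ?case by simp
next
  case (Suc k)
  let ?t = "(hh \<alpha> \<tau> ^^ k) 0"
  have "\<alpha> + (1 - \<alpha>) * ?t \<le> \<alpha> + (1 - \<alpha>) * (1 + k * \<tau>)"
    using Suc a1 by (simp add: mult_left_mono)
  also have "\<dots> \<le> 1 + Suc k * \<tau>"
    using a0 a1 t0 by (simp add: algebra_simps)
  finally have 1: "\<alpha> + (1 - \<alpha>) * ?t \<le> 1 + Suc k * \<tau>" .
  have 2: "?t + \<tau> \<le> 1 + Suc k * \<tau>" using Suc by (simp add: algebra_simps)
  have "hh \<alpha> \<tau> ?t = max (\<alpha> + (1 - \<alpha>) * ?t) (?t + \<tau>)"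
    unfolding hh_def max_def by (simp add: algebra_simps)
  then show ?case using 1 2 by simp
qed

lemma own_mono: "s \<le> t \<Longrightarrow> s + max (c - \<alpha> * s) \<tau> \<le> t + max (c - \<alpha> * t) \<tau>"
proof -
  assume st: "s \<le> t"
  have "(1 - \<alpha>) * s \<le> (1 - \<alpha>) * t" using st a1 by (simp add: mult_left_mono)
  then have "s - \<alpha> * s \<le> t - \<alpha> * t" by (simp add: algebra_simps)
  then show ?thesis unfolding max_def using st by (simp split: if_splits; linarith)
qed

end

lemma card_ge: assumes "j < (m::nat)" shows "i div m \<le> card {k. k < i \<and> k mod m = j}"
proof -
  have "(\<lambda>q. q * m + j) ` {..<i div m} \<subseteq> {k. k < i \<and> k mod m = j}"
  proof
    fix x assume "x \<in> (\<lambda>q. q * m + j) ` {..<i div m}"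
    then obtain q where q: "q < i div m" "x = q * m + j" by auto
    have "Suc q * m \<le> (i div m) * m" using q(1) by (intro mult_le_mono1) simp
    also have "\<dots> \<le> i" by simp
    finally have "x < i" using q assms by simp
    moreover have "x mod m = j" using q assms by simp
    ultimately show "x \<in> {k. k < i \<and> k mod m = j}" by simp
  qed
  moreover have inj: "inj_on (\<lambda>q. q * m + j) {..<i div m}"
    using assms by (auto simp: inj_on_def)
  moreover have "finite {k. k < i \<and> k mod m = j}" by simp
  ultimately have "card ((\<lambda>q. q * m + j) ` {..<i div m}) \<le> card {k. k < i \<and> k mod m = j}"
    by (intro card_mono) 
  then show ?thesis using card_image[OF \<open>inj_on (\<lambda>q. q * m + j) {..<i div m}\<close>] by simp
qed

lemma card_le: assumes "0 < (m::nat)" shows "card {k. k < i \<and> k mod m = i mod m} \<le> i div m"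
proof -
  have "(\<lambda>k. k div m) ` {k. k < i \<and> k mod m = i mod m} \<subseteq> {..<i div m}"
  proof
    fix x assume "x \<in> (\<lambda>k. k div m) ` {k. k < i \<and> k mod m = i mod m}"
    then obtain k where k: "k < i" "k mod m = i mod m" "x = k div m" by auto
    show "x \<in> {..<i div m}"
    proof (rule ccontr)
      assume "x \<notin> {..<i div m}"
      then have "i div m \<le> k div m" using k by simp
      then have "(i div m) * m \<le> (k div m) * m" by (rule mult_le_mono1)
      moreover have "i = (i div m) * m + i mod m" "k = (k div m) * m + k mod m" by simp_all
      ultimately have "i \<le> k" using k(2) by linarith
      then show False using k by simp
    qed
  qed
  moreover have "inj_on (\<lambda>k. k div m) {k. k < i \<and> k mod m = i mod m}"
  proof (rule inj_onI)
    fix x y assume "x \<in> {k. k < i \<and> k mod m = i mod m}" "y \<in> {k. k < i \<and> k mod m = i mod m}"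
      "x div m = y div m"
    then have "x mod m = y mod m" "x div m = y div m" by auto
    then show "x = y" by (metis div_mult_mod_eq)
  qed
  ultimately have "card ((\<lambda>k. k div m) ` {k. k < i \<and> k mod m = i mod m}) \<le> card {..<i div m}"
    by (intro card_mono) simp_all
  then show ?thesis using card_image[OF \<open>inj_on (\<lambda>k. k div m) {k. k < i \<and> k mod m = i mod m}\<close>] by simp
qed

lemma len_filter: "length (filter P [0..<i]) = card {k. k < i \<and> P k}"
  unfolding length_filter_conv_card by (rule arg_cong[where f=card]) auto

theorem theorem17:
  fixes \<delta> :: real and m :: nat
  assumes "\<delta> > 0" and "m \<ge> 2"
  shows "\<exists>(n::nat) (a::nat \<Rightarrow> real) (b::nat \<Rightarrow> real) (\<tau>::real) (prio::nat list).
           \<tau> > 0 \<and> (\<forall>i<n. b i \<ge> 0 \<and> 0 \<le> a i \<and> a i \<le> 1) \<and> SDR_list n a prio \<and>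
           (\<exists>\<sigma>. is_NE n m (\<lambda>i t. max (b i - a i * t) \<tau>) (\<lambda>j. 1) prio \<sigma>) \<and>
           PoA n m (\<lambda>i t. max (b i - a i * t) \<tau>) (\<lambda>j. 1) prio \<ge> 2 - \<delta>"
proof -
  define \<epsilon> where "\<epsilon> = min (\<delta>/4) (1/2)"
  have e0: "0 < \<epsilon>" and e1: "\<epsilon> \<le> 1/2" and ed: "\<epsilon> \<le> \<delta>/4"
    using assms(1) by (auto simp: \<epsilon>_def)
  obtain K where K: "(1 - \<epsilon>) ^ K < \<epsilon>" using real_arch_pow_inv[OF e0, of "1 - \<epsilon>"] e0 by auto
  define N where "N = m * K"
  define n where "n = Suc N"
  define \<tau> where "\<tau> = \<epsilon> / real n"
  define b where "b = (\<lambda>k. if k < N then \<epsilon> else (1::real))"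
  define prio where "prio = [0..<n]"
  define p where "p = (\<lambda>i t. max (b i - \<epsilon> * t) \<tau>)"
  define G where "G = (\<lambda>i k. (hh \<epsilon> \<tau> ^^ k) 0 + max (b i - \<epsilon> * (hh \<epsilon> \<tau> ^^ k) 0) \<tau>)"
  have t0: "0 < \<tau>" using e0 by (simp add: \<tau>_def n_def)
  have tn: "real n * \<tau> = \<epsilon>" by (simp add: \<tau>_def n_def)
  have n1: "1 \<le> real n" by (simp add: n_def)
  have "\<tau> * 1 \<le> \<tau> * real n" using n1 t0 by (intro mult_left_mono) auto
  then have t1: "\<tau> \<le> 1" using tn e1 by (simp add: mult.commute)
  have a0: "0 \<le> \<epsilon>" and a1: "\<epsilon> \<le> 1" using e0 e1 by auto
  have m0: "0 < m" using assms(2) by simp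
  have bN: "\<forall>k<N. b k = \<epsilon>" by (simp add: b_def)
  have C: "completion p (\<lambda>j. 1) prio \<sigma> i = G i (card {k. k < i \<and> \<sigma> k = \<sigma> i})" if "i < n" for \<sigma> i
    using compl[of i N b \<epsilon> \<tau> \<sigma>, OF _ bN] that unfolding p_def prio_def n_def G_def len_filter by simp
  have Gmono: "G i k \<le> G i k'" if "k \<le> k'" for i k k'
    unfolding G_def by (rule own_mono[OF a0 a1 t0], rule pow_mono[OF a0 a1 t0 that])
  have cardi: "card {k. k < i \<and> P k} \<le> i" for i P
    using card_mono[of "{..<i}" "{k. k < i \<and> P k}"] by auto
  have Gup: "G i k \<le> 2 + \<epsilon>" if "k < n" for i k
  proof -
    have "0 \<le> \<epsilon> * (hh \<epsilon> \<tau> ^^ k) 0" using pow_nonneg[OF a0 a1 t0, of k] a0 by simp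
    moreover have "b i \<le> 1" using a1 by (simp add: b_def)
    ultimately have "max (b i - \<epsilon> * (hh \<epsilon> \<tau> ^^ k) 0) \<tau> \<le> 1" using t1 by simp
    then have "G i k \<le> (hh \<epsilon> \<tau> ^^ k) 0 + 1" unfolding G_def by simp
    also have "\<dots> \<le> 1 + k * \<tau> + 1" using pow_upper[OF a0 a1 t0, of k] by simp
    also have "\<dots> \<le> 2 + \<epsilon>"
    proof -
      have "real k * \<tau> \<le> real n * \<tau>" using that t0 by (intro mult_right_mono) auto
      then show ?thesis using tn by simp
    qed
    finally show ?thesis .
  qed
  have GN: "1 + (1 - \<epsilon>) * (hh \<epsilon> \<tau> ^^ k) 0 \<le> G N k" for k
    unfolding G_def by (simp add: b_def algebra_simps)
  have compl_up: "completion p (\<lambda>j. 1) prio \<sigma> i \<le> 2 + \<epsilon>" if "i < n" for \<sigma> i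
  proof -
    have "card {k. k < i \<and> \<sigma> k = \<sigma> i} < n" using cardi[of i] that by (rule le_less_trans)
    then show ?thesis using C[OF that] Gup by simp
  qed
  have compl_N: "1 \<le> completion p (\<lambda>j. 1) prio \<sigma> N" for \<sigma>
  proof -
    have "1 \<le> 1 + (1 - \<epsilon>) * (hh \<epsilon> \<tau> ^^ card {k. k < N \<and> \<sigma> k = \<sigma> N}) 0"
      using pow_nonneg[OF a0 a1 t0] a1 by simp
    then have "1 \<le> G N (card {k. k < N \<and> \<sigma> k = \<sigma> N})" using GN order_trans by blast
    then show ?thesis using C[of N \<sigma>] by (simp add: n_def)
  qed
  have mk_ge: "completion p (\<lambda>j. 1) prio \<sigma> i \<le> makespan n p (\<lambda>j. 1) prio \<sigma>" if "i < n" for \<sigma> i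
    unfolding makespan_def using that by (intro Max_ge) auto
  have mk_le: "makespan n p (\<lambda>j. 1) prio \<sigma> \<le> B" if "0 \<le> B" "\<And>i. i < n \<Longrightarrow> completion p (\<lambda>j. 1) prio \<sigma> i \<le> B" for \<sigma> B
    unfolding makespan_def using that by (intro Max.boundedI) auto
  have mk1: "1 \<le> makespan n p (\<lambda>j. 1) prio \<sigma>" for \<sigma>
    using compl_N[of \<sigma>] mk_ge[of N \<sigma>] by (simp add: n_def)
  have mk2: "makespan n p (\<lambda>j. 1) prio \<sigma> \<le> 2 + \<epsilon>" for \<sigma>
    using e0 compl_up by (intro mk_le) auto
  define \<sigma>o where "\<sigma>o = (\<lambda>i. if i = N then m - 1 else i mod (m - 1))"
  have hm: "i mod (m - 1) < m" for i
  proof -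
    have "i mod (m - 1) < m - 1" using assms(2) by (intro mod_less_divisor) simp
    then show ?thesis by simp
  qed
  have vo: "valid_profile n m \<sigma>o" unfolding valid_profile_def \<sigma>o_def using assms(2) hm by auto
  have mko: "makespan n p (\<lambda>j. 1) prio \<sigma>o \<le> 1 + \<epsilon>"
  proof (rule mk_le)
    show "0 \<le> 1 + \<epsilon>" using e0 by simp
    fix i assume i: "i < n"
    show "completion p (\<lambda>j. 1) prio \<sigma>o i \<le> 1 + \<epsilon>"
    proof (cases "i = N")
      case True
      have em: "{k. k < i \<and> \<sigma>o k = \<sigma>o i} = {}"
      proof -
        have "x mod (m - 1) < m - 1" for x using assms(2) by (intro mod_less_divisor) simp
        then show ?thesis using True by (auto simp: \<sigma>o_def) (metis less_irrefl One_nat_def)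
      qed
      have "completion p (\<lambda>j. 1) prio \<sigma>o i = G i (card {k. k < i \<and> \<sigma>o k = \<sigma>o i})" by (rule C[OF i])
      also have "\<dots> = G i 0" unfolding em by simp
      also have "\<dots> = 1" using True t1 by (simp add: G_def b_def)
      finally show ?thesis using e0 by simp
    next
      case False
      then have iN: "i < N" using i n_def by simp
      let ?k = "card {k. k < i \<and> \<sigma>o k = \<sigma>o i}"
      have "G i ?k = (hh \<epsilon> \<tau> ^^ Suc ?k) 0" using iN by (simp add: G_def b_def hh_def)
      also have "\<dots> \<le> 1 + Suc ?k * \<tau>" by (rule pow_upper[OF a0 a1 t0])
      also have "\<dots> \<le> 1 + real n * \<tau>"
      proof -
        have "?k \<le> i" by (rule cardi)
        then have "Suc ?k \<le> n" using iN n_def by simp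
        then show ?thesis using t0 by (intro add_left_mono mult_right_mono) auto
      qed
      finally show ?thesis using C[OF i] tn by simp
    qed
  qed
  define Sopt where "Sopt = {makespan n p (\<lambda>j. 1) prio \<sigma> | \<sigma>. valid_profile n m \<sigma>}"
  have opt_def': "OPT n m p (\<lambda>j. 1) prio = Inf Sopt" unfolding OPT_def Sopt_def ..
  have bb: "bdd_below Sopt" unfolding Sopt_def bdd_below_def using mk1 by blast
  have opt_le: "OPT n m p (\<lambda>j. 1) prio \<le> 1 + \<epsilon>"
    unfolding opt_def' using cInf_lower[OF _ bb, of "makespan n p (\<lambda>j. 1) prio \<sigma>o"] vo mko
    unfolding Sopt_def by fastforce
  have opt_ge: "1 \<le> OPT n m p (\<lambda>j. 1) prio"
    unfolding opt_def' using vo mk1 unfolding Sopt_def by (intro cInf_greatest) auto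
  define \<sigma> where "\<sigma> = (\<lambda>i. i mod m)"
  have ne: "is_NE n m p (\<lambda>j. 1) prio \<sigma>"
    unfolding is_NE_def
  proof (intro conjI allI impI)
    show "valid_profile n m \<sigma>" unfolding valid_profile_def \<sigma>_def using m0 by simp
    fix i j assume i: "i < n" and j: "j < m"
    have "completion p (\<lambda>j. 1) prio \<sigma> i = G i (card {k. k < i \<and> k mod m = i mod m})"
      using C[OF i] by (simp add: \<sigma>_def)
    also have "\<dots> \<le> G i (i div m)" by (rule Gmono, rule card_le[OF m0])
    also have "\<dots> \<le> G i (card {k. k < i \<and> k mod m = j})" by (rule Gmono, rule card_ge[OF j])
    also have "{k. k < i \<and> k mod m = j} = {k. k < i \<and> (\<sigma>(i := j)) k = (\<sigma>(i := j)) i}"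
      by (auto simp: \<sigma>_def)
    also have "G i (card \<dots>) = completion p (\<lambda>j. 1) prio (\<sigma>(i := j)) i"
      using C[OF i] by simp
    finally show "completion p (\<lambda>j. 1) prio \<sigma> i \<le> completion p (\<lambda>j. 1) prio (\<sigma>(i := j)) i" .
  qed
  have mkne: "2 - 2 * \<epsilon> + \<epsilon> * \<epsilon> \<le> makespan n p (\<lambda>j. 1) prio \<sigma>"
  proof -
    have NK: "N div m = K" "N mod m = 0" using m0 by (simp_all add: N_def)
    have "K \<le> card {k. k < N \<and> k mod m = 0}" using card_ge[OF m0, of N] NK by simp
    then have "(hh \<epsilon> \<tau> ^^ K) 0 \<le> (hh \<epsilon> \<tau> ^^ card {k. k < N \<and> \<sigma> k = \<sigma> N}) 0"
      using NK by (intro pow_mono[OF a0 a1 t0]) (simp add: \<sigma>_def)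
    moreover have "1 - \<epsilon> \<le> (hh \<epsilon> \<tau> ^^ K) 0" using pow_lower[OF a0 a1 t0, of K] K by simp
    ultimately have "1 - \<epsilon> \<le> (hh \<epsilon> \<tau> ^^ card {k. k < N \<and> \<sigma> k = \<sigma> N}) 0" by simp
    then have "(1 - \<epsilon>) * (1 - \<epsilon>) \<le> (1 - \<epsilon>) * (hh \<epsilon> \<tau> ^^ card {k. k < N \<and> \<sigma> k = \<sigma> N}) 0"
      using a1 by (intro mult_left_mono) auto
    then have "2 - 2 * \<epsilon> + \<epsilon> * \<epsilon> \<le> G N (card {k. k < N \<and> \<sigma> k = \<sigma> N})"
      using GN[of "card {k. k < N \<and> \<sigma> k = \<sigma> N}"] by (simp add: algebra_simps)
    then show ?thesis using C[of N \<sigma>] mk_ge[of N \<sigma>] n_def by simp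
  qed
  define S where "S = {makespan n p (\<lambda>j. 1) prio \<sigma> / OPT n m p (\<lambda>j. 1) prio | \<sigma>. is_NE n m p (\<lambda>j. 1) prio \<sigma>}"
  have ba: "bdd_above S"
  proof -
    have "x \<le> 2 + \<epsilon>" if xS: "x \<in> S" for x
    proof -
      obtain \<sigma>' where x: "x = makespan n p (\<lambda>j. 1) prio \<sigma>' / OPT n m p (\<lambda>j. 1) prio"
        using xS unfolding S_def by auto
      have "x \<le> makespan n p (\<lambda>j. 1) prio \<sigma>'"
      proof -
        let ?M = "makespan n p (\<lambda>j. 1) prio \<sigma>'" and ?O = "OPT n m p (\<lambda>j. 1) prio"
        have "?M * 1 \<le> ?M * ?O" using opt_ge mk1[of \<sigma>'] by (intro mult_left_mono) auto
        then show ?thesis unfolding x using opt_ge by (simp add: divide_le_eq)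
      qed
      then show ?thesis using mk2[of \<sigma>'] by simp
    qed
    then show ?thesis unfolding bdd_above_def by blast
  qed
  have "makespan n p (\<lambda>j. 1) prio \<sigma> / OPT n m p (\<lambda>j. 1) prio \<le> PoA n m p (\<lambda>j. 1) prio"
  proof -
    have "makespan n p (\<lambda>j. 1) prio \<sigma> / OPT n m p (\<lambda>j. 1) prio \<in> S" using ne unfolding S_def by blast
    then have "makespan n p (\<lambda>j. 1) prio \<sigma> / OPT n m p (\<lambda>j. 1) prio \<le> Sup S" by (rule cSup_upper[OF _ ba])
    then show ?thesis unfolding PoA_def S_def .
  qed
  moreover have "2 - \<delta> \<le> makespan n p (\<lambda>j. 1) prio \<sigma> / OPT n m p (\<lambda>j. 1) prio"
  proof -
    have "(2 - \<delta>) * OPT n m p (\<lambda>j. 1) prio \<le> 2 - 2 * \<epsilon> + \<epsilon> * \<epsilon>"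
    proof (cases "2 - \<delta> \<le> 0")
      case True
      have "(2 - \<delta>) * OPT n m p (\<lambda>j. 1) prio \<le> 0" using True opt_ge by (intro mult_nonpos_nonneg) auto
      moreover have "0 \<le> (1 - \<epsilon>) * (1 - \<epsilon>)" by simp
      ultimately show ?thesis by (simp add: algebra_simps)
    next
      case False
      then have "(2 - \<delta>) * OPT n m p (\<lambda>j. 1) prio \<le> (2 - \<delta>) * (1 + \<epsilon>)"
        using opt_le by (intro mult_left_mono) auto
      also have "\<dots> \<le> 2 - 2 * \<epsilon> + \<epsilon> * \<epsilon>"
      proof -
        have "(2 - \<delta>) * (1 + \<epsilon>) = 2 + 2 * \<epsilon> - \<delta> - \<delta> * \<epsilon>" by (simp add: algebra_simps)
        moreover have "0 \<le> \<delta> * \<epsilon>" "0 \<le> \<epsilon> * \<epsilon>" using e0 assms(1) by auto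
        ultimately show ?thesis using ed by linarith
      qed
      finally show ?thesis .
    qed
    then show ?thesis using mkne opt_ge by (simp add: le_divide_eq)
  qed
  ultimately have poa: "2 - \<delta> \<le> PoA n m p (\<lambda>j. 1) prio" by simp
  have sdr: "SDR_list n (\<lambda>_. \<epsilon>) prio"
    unfolding SDR_list_def prio_def by (auto simp: sorted_iff_nth_mono)
  have nonneg: "\<forall>i<n. b i \<ge> 0 \<and> 0 \<le> \<epsilon> \<and> \<epsilon> \<le> 1" using a0 a1 by (simp add: b_def)
  show ?thesis
    apply (rule exI[of _ n], rule exI[of _ "\<lambda>_. \<epsilon>"], rule exI[of _ b], rule exI[of _ \<tau>], rule exI[of _ prio])
    using t0 nonneg sdr ne poa unfolding p_def by auto
qed

end
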